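(* For $n\ge1$, $\left|\Pi_n\wr C_2(1^11^2,1^12^2)\right|=(n+1)B(n)$, where $B(n)$ is the $n$th Bell number.
   Context: For $n\ge0$ let $[n]=\{1,\dots,n\}$. A $2$-colored set partition of $[n]$ is a set partition of $[n]$ together with an assignment of a color from $\{1,2\}$ to each element; $\Pi_n\wr C_2$ is the set of these. For a set $S$ of patterns, $\Pi_n\wr C_2(S)$ is the set of such colored partitions avoiding every pattern in $S$ in the pattern sense. For the patterns used here: $\sigma$ contains $1^11^2$ iff there are $i<j$ in the same block with $i$ colored $1$ and $j$ colored $2$; $\sigma$ contains $1^12^2$ iff there are $i<j$ in different blocks with $i$ colored $1$ and $j$ colored $2$. $B(n)$ is the number of set partitions of $[n]$. *)

theory Defs
  imports "HOL-Library.Disjoint_Sets" "HOL-Library.FuncSet"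
begin

definition set_partitions :: "nat \<Rightarrow> nat set set set" where
  "set_partitions n = {P. partition_on {1..n} P}"

definition Bell :: "nat \<Rightarrow> nat" where
  "Bell n = card (set_partitions n)"

definition colored_partitions :: "nat \<Rightarrow> (nat set set \<times> (nat \<Rightarrow> nat)) set" where
  "colored_partitions n = {(P, c). partition_on {1..n} P \<and> c \<in> {1..n} \<rightarrow>\<^sub>E {1, 2}}"

definition contains_11_12 :: "nat set set \<times> (nat \<Rightarrow> nat) \<Rightarrow> bool" where
  "contains_11_12 \<sigma> = (case \<sigma> of (P, c) \<Rightarrow>
     \<exists>i j B. i < j \<and> B \<in> P \<and> i \<in> B \<and> j \<in> B \<and> c i = 1 \<and> c j = 2)"

definition contains_11_22 :: "nat set set \<times> (nat \<Rightarrow> nat) \<Rightarrow> bool" where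
  "contains_11_22 \<sigma> = (case \<sigma> of (P, c) \<Rightarrow>
     \<exists>i j B B'. i < j \<and> B \<in> P \<and> B' \<in> P \<and> B \<noteq> B' \<and> i \<in> B \<and> j \<in> B'
        \<and> c i = 1 \<and> c j = 2)"

end

theory Submission
  imports Defs
begin

definition goodC :: "nat \<Rightarrow> (nat \<Rightarrow> nat) set" where
  "goodC n = {c \<in> {1..n} \<rightarrow>\<^sub>E {1, 2}. \<forall>i j. i < j \<longrightarrow> i \<in> {1..n} \<longrightarrow> j \<in> {1..n} \<longrightarrow> \<not> (c i = 1 \<and> c j = 2)}"

definition cf :: "nat \<Rightarrow> nat \<Rightarrow> nat \<Rightarrow> nat" where
  "cf n k = (\<lambda>i. if i \<in> {1..n} then (if i \<le> k then 2 else 1) else undefined)"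

lemma set_eq:
  "{\<sigma> \<in> colored_partitions n. \<not> contains_11_12 \<sigma> \<and> \<not> contains_11_22 \<sigma>}
     = set_partitions n \<times> goodC n"
proof safe
  fix P c assume a: "(P, c) \<in> colored_partitions n" "\<not> contains_11_12 (P, c)"
    "\<not> contains_11_22 (P, c)"
  then have p: "partition_on {1..n} P" and ce: "c \<in> {1..n} \<rightarrow>\<^sub>E {1, 2}"
    by (auto simp: colored_partitions_def)
  show "P \<in> set_partitions n" using p by (simp add: set_partitions_def)
  have "\<not> (c i = 1 \<and> c j = 2)" if "i < j" "i \<in> {1..n}" "j \<in> {1..n}" for i j
  proof
    assume cc: "c i = 1 \<and> c j = 2"
    from p have u: "\<Union>P = {1..n}" by (simp add: partition_on_def)
    have "i \<in> \<Union>P" "j \<in> \<Union>P" using u that(2,3) by simp_all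
    then obtain B B' where B: "B \<in> P" "i \<in> B" and B': "B' \<in> P" "j \<in> B'" by (meson UnionE)
    show False
    proof (cases "B = B'")
      case True then show ?thesis using a(2) B B' cc that unfolding contains_11_12_def by auto
    next
      case False then show ?thesis using a(3) B B' cc that unfolding contains_11_22_def by blast
    qed
  qed
  then show "c \<in> goodC n" using ce unfolding goodC_def by blast
next
  fix P c assume "P \<in> set_partitions n" "c \<in> goodC n"
  then show "(P, c) \<in> colored_partitions n"
    by (auto simp: set_partitions_def goodC_def colored_partitions_def)
next
  fix P c assume a: "P \<in> set_partitions n" "c \<in> goodC n" "contains_11_12 (P, c)"
  then have u: "\<Union>P = {1..n}" by (simp add: set_partitions_def partition_on_def)
  from a(3) obtain i j B where "i < j" "B \<in> P" "i \<in> B" "j \<in> B" "c i = 1" "c j = 2"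
    unfolding contains_11_12_def by auto
  moreover have "i \<in> {1..n}" "j \<in> {1..n}" using u calculation by (metis UnionI)+
  ultimately show False using a(2) unfolding goodC_def by blast
next
  fix P c assume a: "P \<in> set_partitions n" "c \<in> goodC n" "contains_11_22 (P, c)"
  then have u: "\<Union>P = {1..n}" by (simp add: set_partitions_def partition_on_def)
  from a(3) obtain i j B B' where "i < j" "B \<in> P" "i \<in> B" "B' \<in> P" "j \<in> B'" "c i = 1" "c j = 2"
    unfolding contains_11_22_def by auto
  moreover have "i \<in> {1..n}" "j \<in> {1..n}" using u calculation by (metis UnionI)+
  ultimately show False using a(2) unfolding goodC_def by blast
qed

lemma goodC_img: "goodC n = cf n ` {0..n}"
proof safe
  fix c assume c: "c \<in> goodC n"
  define k where "k = Max ({0} \<union> {i\<in>{1..n}. c i = 2})"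
  have fin: "finite ({0} \<union> {i\<in>{1..n}. c i = 2})" by auto
  have kn: "k \<le> n" unfolding k_def using fin by (subst Max_le_iff) auto
  have km: "k = 0 \<or> (k \<in> {1..n} \<and> c k = 2)"
    using Max_in[OF fin] unfolding k_def by auto
  have "c = cf n k"
  proof
    fix i show "c i = cf n k i"
    proof (cases "i \<in> {1..n}")
      case False then show ?thesis using c by (auto simp: goodC_def cf_def PiE_def extensional_def)
    next
      case True
      have ci: "c i \<in> {1,2}" using c True by (auto simp: goodC_def)
      show ?thesis
      proof (cases "i \<le> k")
        case le: True
        have "c i = 2"
        proof (cases "i = k")
          case True then show ?thesis using km \<open>i \<in> {1..n}\<close> by auto
        next
          case False then have "i < k" using le by simp
          then have "c k = 2" "k \<in> {1..n}" using km by auto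
          then show ?thesis using c True ci \<open>i < k\<close> by (auto simp: goodC_def)
        qed
        then show ?thesis using True le by (simp add: cf_def)
      next
        case gt: False
        have "c i \<noteq> 2"
        proof
          assume "c i = 2"
          then have "i \<le> k" unfolding k_def using fin True by (intro Max_ge) auto
          then show False using gt by simp
        qed
        then show ?thesis using ci True gt by (auto simp: cf_def)
      qed
    qed
  qed
  then show "c \<in> cf n ` {0..n}" using kn by auto
next
  fix k assume "k \<in> {0..n}"
  then show "cf n k \<in> goodC n" by (auto simp: goodC_def cf_def split: if_splits)
qed

lemma cf_inj: "inj_on (cf n) {0..n}"
proof (rule inj_onI)
  fix k k' assume a: "k \<in> {0..n}" "k' \<in> {0..n}" "cf n k = cf n k'"
  show "k = k'"
  proof (rule ccontr)
    assume "k \<noteq> k'"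
    then consider "k < k'" | "k' < k" by linarith
    then show False
    proof cases
      case 1 then have "cf n k k' = cf n k' k'" using a by simp
      then show False using 1 a by (simp add: cf_def split: if_splits)
    next
      case 2 then have "cf n k k = cf n k' k" using a by simp
      then show False using 2 a by (simp add: cf_def split: if_splits)
    qed
  qed
qed

theorem mainTheorem8:
  fixes n :: nat
  assumes "n \<ge> 1"
  shows "card {\<sigma> \<in> colored_partitions n. \<not> contains_11_12 \<sigma> \<and> \<not> contains_11_22 \<sigma>}
           = (n + 1) * Bell n"
proof -
  have "card (goodC n) = n + 1"
    unfolding goodC_img by (simp add: card_image[OF cf_inj])
  then show ?thesis unfolding set_eq card_cartesian_product Bell_def by simp
qed

end
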